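(* Let $\mathcal{M}=\langle M,\circ,e\rangle$ be an effective mge monoid with computable mge function $\eta$, let $\mathcal{T}$ be a monoidal finite-state transducer with output in $\mathcal{M}$, and let $\mathcal{A}^2$ be a (finitely given) squared output automaton for $\mathcal{T}$. Then a valuation $\langle\rho,\nu\rangle$ of $\mathcal{A}^2$ can be effectively computed.
   Context: An mge monoid is a monoid with right cancellation ($ac=bc\Rightarrow a=b$) in which every equalizable pair has a most general equalizer; here a tuple $\langle m_1,\dots,m_n\rangle$ is equalizable if some $\langle x_1,\dots,x_n\rangle$ (an equalizer) satisfies $m_1x_1=\dots=m_nx_n$, and an equalizer is most general (an mge) if every equalizer has the form $\langle x_1x,\dots,x_nx\rangle$ for some $x\in M$. It is effective if elements are represented as a recursive subset of $\mathbb{N}$ with computable operation, equality is decidable, equalizability of pairs is decidable, a computable $\eta:M^2\to M^2$ returns an mge for every equalizable pair, and inverses of invertible elements are computable. A transducer $\mathcal{T}=\langle\Sigma^*\times\mathcal{M},Q,I,F,\Delta\rangle$ has finite $\Delta\subseteq Q\times((\Sigma\cup\{\varepsilon\})\times M)\times Q$; $\Delta^*$ denotes generalized transitions (labels of paths, products of transition labels, including empty paths labelled by the unit). A squared output automaton for $\mathcal{T}$ is a monoidal automaton $\mathcal{A}^2=\langle\mathcal{M}\times\mathcal{M},Q\times Q,I\times I,F\times F,\Delta_2\rangle$ with finite $\Delta_2$ such that $\langle\langle p_1,p_2\rangle,\langle m,n\rangle,\langle q_1,q_2\rangle\rangle\in\Delta_2^*$ iff $\exists u\in\Sigma^*$ with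 $\langle p_1,\langle u,m\rangle,q_1\rangle,\langle p_2,\langle u,n\rangle,q_2\rangle\in\Delta^*$. A pair $\langle m_1,m_2\rangle$ is a relevant pair for a state $\langle q_1,q_2\rangle$ of $\mathcal{A}^2$ if $\langle q_1,q_2\rangle$ lies on a successful path of $\mathcal{A}^2$ (a path from $I\times I$ to $F\times F$) and $\langle\langle i_1,i_2\rangle,\langle m_1,m_2\rangle,\langle q_1,q_2\rangle\rangle\in\Delta_2^*$ for some $\langle i_1,i_2\rangle\in I\times I$. A valuation is a pair of partial functions $\rho,\nu:Q^2\to M^2$ such that: $\rho(q)$ is defined iff $q$ has a relevant pair; if defined, $\rho(q)=\langle e,e\rangle$ when $q\in I^2$ and otherwise $\rho(q)$ is some relevant pair of $q$; $\nu(q)=\langle e,e\rangle$ if $\rho(q)=\langle m,m\rangle$ for some $m$; otherwise $\nu(q)=\eta(\rho(q))$ if $\rho(q)$ is defined and equalizable, and $\nu(q)$ is undefined otherwise. *)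

theory Defs
  imports Main "HOL-Library.Nat_Bijection"
begin

datatype recf = RZero | RSuc | RProj nat | RComp recf "recf list" | RPrim recf recf | RMin recf

inductive eval_recf :: "recf \<Rightarrow> nat list \<Rightarrow> nat \<Rightarrow> bool" where
  "eval_recf RZero xs 0"
| "eval_recf RSuc (x # xs) (Suc x)"
| "i < length xs \<Longrightarrow> eval_recf (RProj i) xs (xs ! i)"
| "list_all2 (\<lambda>g y. eval_recf g xs y) gs ys \<Longrightarrow> eval_recf h ys z \<Longrightarrow> eval_recf (RComp h gs) xs z"
| "eval_recf g xs y \<Longrightarrow> eval_recf (RPrim g h) (0 # xs) y"
| "eval_recf (RPrim g h) (n # xs) y \<Longrightarrow> eval_recf h (y # n # xs) z
     \<Longrightarrow> eval_recf (RPrim g h) (Suc n # xs) z"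
| "eval_recf h (n # xs) 0 \<Longrightarrow> (\<forall>m<n. \<exists>y. y \<noteq> 0 \<and> eval_recf h (m # xs) y)
     \<Longrightarrow> eval_recf (RMin h) xs n"

definition computes_on :: "recf \<Rightarrow> nat set \<Rightarrow> (nat \<Rightarrow> nat) \<Rightarrow> bool" where
  "computes_on r D g \<longleftrightarrow> (\<forall>x\<in>D. eval_recf r [x] (g x))"

definition pairs_code :: "nat set \<Rightarrow> nat set" where
  "pairs_code M = prod_encode ` (M \<times> M)"

definition monoid_on :: "nat set \<Rightarrow> (nat \<Rightarrow> nat \<Rightarrow> nat) \<Rightarrow> nat \<Rightarrow> bool" where
  "monoid_on M f e \<longleftrightarrow> e \<in> M \<and> (\<forall>a\<in>M. \<forall>b\<in>M. f a b \<in> M)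
     \<and> (\<forall>a\<in>M. \<forall>b\<in>M. \<forall>c\<in>M. f (f a b) c = f a (f b c))
     \<and> (\<forall>a\<in>M. f e a = a \<and> f a e = a)"

definition right_cancellative :: "nat set \<Rightarrow> (nat \<Rightarrow> nat \<Rightarrow> nat) \<Rightarrow> bool" where
  "right_cancellative M f \<longleftrightarrow> (\<forall>a\<in>M. \<forall>b\<in>M. \<forall>c\<in>M. f a c = f b c \<longrightarrow> a = b)"

definition equalizable :: "nat set \<Rightarrow> (nat \<Rightarrow> nat \<Rightarrow> nat) \<Rightarrow> nat \<Rightarrow> nat \<Rightarrow> bool" where
  "equalizable M f m1 m2 \<longleftrightarrow> (\<exists>x1\<in>M. \<exists>x2\<in>M. f m1 x1 = f m2 x2)"

definition is_mge :: "nat set \<Rightarrow> (nat \<Rightarrow> nat \<Rightarrow> nat) \<Rightarrow> nat \<Rightarrow> nat \<Rightarrow> nat \<times> nat \<Rightarrow> bool" where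
  "is_mge M f m1 m2 p \<longleftrightarrow> fst p \<in> M \<and> snd p \<in> M \<and> f m1 (fst p) = f m2 (snd p)
     \<and> (\<forall>y1\<in>M. \<forall>y2\<in>M. f m1 y1 = f m2 y2 \<longrightarrow>
          (\<exists>x\<in>M. y1 = f (fst p) x \<and> y2 = f (snd p) x))"

definition mge_monoid :: "nat set \<Rightarrow> (nat \<Rightarrow> nat \<Rightarrow> nat) \<Rightarrow> nat \<Rightarrow> bool" where
  "mge_monoid M f e \<longleftrightarrow> monoid_on M f e \<and> right_cancellative M f
     \<and> (\<forall>a\<in>M. \<forall>b\<in>M. equalizable M f a b \<longrightarrow> (\<exists>p. is_mge M f a b p))"

definition invertible :: "nat set \<Rightarrow> (nat \<Rightarrow> nat \<Rightarrow> nat) \<Rightarrow> nat \<Rightarrow> nat \<Rightarrow> bool" where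
  "invertible M f e a \<longleftrightarrow> (\<exists>b\<in>M. f a b = e \<and> f b a = e)"

definition effective_mge_monoid ::
  "nat set \<Rightarrow> (nat \<Rightarrow> nat \<Rightarrow> nat) \<Rightarrow> nat \<Rightarrow> (nat \<times> nat \<Rightarrow> nat \<times> nat) \<Rightarrow> bool" where
  "effective_mge_monoid M f e \<eta> \<longleftrightarrow> mge_monoid M f e
     \<and> (\<exists>r. computes_on r UNIV (\<lambda>x. if x \<in> M then 1 else 0))
     \<and> (\<exists>r. computes_on r (pairs_code M) (\<lambda>x. f (fst (prod_decode x)) (snd (prod_decode x))))
     \<and> (\<exists>r. computes_on r (pairs_code M)
            (\<lambda>x. if fst (prod_decode x) = snd (prod_decode x) then 1 else 0))
     \<and> (\<exists>r. computes_on r (pairs_code M)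
            (\<lambda>x. if equalizable M f (fst (prod_decode x)) (snd (prod_decode x)) then 1 else 0))
     \<and> (\<forall>a\<in>M. \<forall>b\<in>M. \<eta> (a, b) \<in> M \<times> M)
     \<and> (\<forall>a\<in>M. \<forall>b\<in>M. equalizable M f a b \<longrightarrow> is_mge M f a b (\<eta> (a, b)))
     \<and> (\<exists>r. computes_on r (pairs_code M) (\<lambda>x. prod_encode (\<eta> (prod_decode x))))
     \<and> (\<exists>inv. (\<forall>a\<in>M. invertible M f e a \<longrightarrow> inv a \<in> M \<and> f a (inv a) = e \<and> f (inv a) a = e)
            \<and> (\<exists>r. computes_on r {a\<in>M. invertible M f e a} inv))"

inductive_set gen_trans :: "('q \<times> 'l \<times> 'q) set \<Rightarrow> ('l \<Rightarrow> 'l \<Rightarrow> 'l) \<Rightarrow> 'l \<Rightarrow> ('q \<times> 'l \<times> 'q) set"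
  for \<Delta> :: "('q \<times> 'l \<times> 'q) set" and mult :: "'l \<Rightarrow> 'l \<Rightarrow> 'l" and one :: 'l where
  refl: "(q, one, q) \<in> gen_trans \<Delta> mult one"
| step: "(p, x, q) \<in> gen_trans \<Delta> mult one \<Longrightarrow> (q, y, r) \<in> \<Delta> \<Longrightarrow> (p, mult x y, r) \<in> gen_trans \<Delta> mult one"

text \<open>Transducer transitions: (p, (a, m), q) with a = None for epsilon, Some c for letter c.\<close>
definition transducer ::
  "nat set \<Rightarrow> nat set \<Rightarrow> nat set \<Rightarrow> nat set \<Rightarrow> nat set \<Rightarrow> (nat \<times> (nat option \<times> nat) \<times> nat) set \<Rightarrow> bool" where
  "transducer M Sig Q I F \<Delta> \<longleftrightarrow> finite Sig \<and> finite Q \<and> I \<subseteq> Q \<and> F \<subseteq> Q \<and> finite \<Delta>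
     \<and> \<Delta> \<subseteq> Q \<times> ((Some ` Sig \<union> {None}) \<times> M) \<times> Q"

definition T_star :: "(nat \<Rightarrow> nat \<Rightarrow> nat) \<Rightarrow> nat \<Rightarrow> (nat \<times> (nat option \<times> nat) \<times> nat) set
    \<Rightarrow> (nat \<times> (nat list \<times> nat) \<times> nat) set" where
  "T_star f e \<Delta> = gen_trans
     ((\<lambda>(p, (a, m), q). (p, ((case a of None \<Rightarrow> [] | Some c \<Rightarrow> [c]), m), q)) ` \<Delta>)
     (\<lambda>(u, m) (v, n). (u @ v, f m n)) ([], e)"

definition A2_star :: "(nat \<Rightarrow> nat \<Rightarrow> nat) \<Rightarrow> nat \<Rightarrow> ((nat \<times> nat) \<times> (nat \<times> nat) \<times> (nat \<times> nat)) set
    \<Rightarrow> ((nat \<times> nat) \<times> (nat \<times> nat) \<times> (nat \<times> nat)) set" where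
  "A2_star f e \<Delta>2 = gen_trans \<Delta>2 (\<lambda>(m1, m2) (n1, n2). (f m1 n1, f m2 n2)) (e, e)"

definition squared_output_automaton ::
  "nat set \<Rightarrow> (nat \<Rightarrow> nat \<Rightarrow> nat) \<Rightarrow> nat \<Rightarrow> nat set \<Rightarrow> nat set \<Rightarrow> nat set \<Rightarrow> nat set
    \<Rightarrow> (nat \<times> (nat option \<times> nat) \<times> nat) set
    \<Rightarrow> ((nat \<times> nat) \<times> (nat \<times> nat) \<times> (nat \<times> nat)) set \<Rightarrow> bool" where
  "squared_output_automaton M f e Sig Q I F \<Delta> \<Delta>2 \<longleftrightarrow> finite \<Delta>2
     \<and> \<Delta>2 \<subseteq> (Q \<times> Q) \<times> (M \<times> M) \<times> (Q \<times> Q)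
     \<and> (\<forall>p1\<in>Q. \<forall>p2\<in>Q. \<forall>q1\<in>Q. \<forall>q2\<in>Q. \<forall>m n.
          ((p1, p2), (m, n), (q1, q2)) \<in> A2_star f e \<Delta>2 \<longleftrightarrow>
          (\<exists>u. (p1, (u, m), q1) \<in> T_star f e \<Delta> \<and> (p2, (u, n), q2) \<in> T_star f e \<Delta>))"

definition relevant_pair :: "(nat \<Rightarrow> nat \<Rightarrow> nat) \<Rightarrow> nat \<Rightarrow> nat set \<Rightarrow> nat set
    \<Rightarrow> ((nat \<times> nat) \<times> (nat \<times> nat) \<times> (nat \<times> nat)) set \<Rightarrow> nat \<times> nat \<Rightarrow> nat \<times> nat \<Rightarrow> bool" where
  "relevant_pair f e I F \<Delta>2 q mp \<longleftrightarrow>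
     (\<exists>i\<in>I \<times> I. \<exists>g\<in>F \<times> F. \<exists>x y. (i, x, q) \<in> A2_star f e \<Delta>2 \<and> (q, y, g) \<in> A2_star f e \<Delta>2)
     \<and> (\<exists>i\<in>I \<times> I. (i, mp, q) \<in> A2_star f e \<Delta>2)"

definition valuation :: "nat set \<Rightarrow> (nat \<Rightarrow> nat \<Rightarrow> nat) \<Rightarrow> nat \<Rightarrow> (nat \<times> nat \<Rightarrow> nat \<times> nat)
    \<Rightarrow> nat set \<Rightarrow> nat set \<Rightarrow> nat set \<Rightarrow> ((nat \<times> nat) \<times> (nat \<times> nat) \<times> (nat \<times> nat)) set
    \<Rightarrow> (nat \<times> nat \<Rightarrow> (nat \<times> nat) option) \<Rightarrow> (nat \<times> nat \<Rightarrow> (nat \<times> nat) option) \<Rightarrow> bool" where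
  "valuation M f e \<eta> Q I F \<Delta>2 \<rho> \<nu> \<longleftrightarrow> (\<forall>q\<in>Q \<times> Q.
     (\<rho> q \<noteq> None \<longleftrightarrow> (\<exists>mp. relevant_pair f e I F \<Delta>2 q mp))
     \<and> (\<forall>r. \<rho> q = Some r \<longrightarrow>
          (if q \<in> I \<times> I then r = (e, e) else relevant_pair f e I F \<Delta>2 q r))
     \<and> \<nu> q = (case \<rho> q of None \<Rightarrow> None
               | Some (a, b) \<Rightarrow> if a = b then Some (e, e)
                               else if equalizable M f a b then Some (\<eta> (a, b)) else None))"

definition enc_set :: "nat set \<Rightarrow> nat" where
  "enc_set S = list_encode (sorted_list_of_set S)"

definition enc_opt :: "nat option \<Rightarrow> nat" where
  "enc_opt x = (case x of None \<Rightarrow> 0 | Some n \<Rightarrow> Suc n)"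

definition enc_trans :: "nat \<times> (nat option \<times> nat) \<times> nat \<Rightarrow> nat" where
  "enc_trans t = (case t of (p, (a, m), q) \<Rightarrow> prod_encode (p, prod_encode (enc_opt a, prod_encode (m, q))))"

definition enc_trans2 :: "(nat \<times> nat) \<times> (nat \<times> nat) \<times> (nat \<times> nat) \<Rightarrow> nat" where
  "enc_trans2 t = (case t of (p, mn, q) \<Rightarrow> prod_encode (prod_encode p, prod_encode (prod_encode mn, prod_encode q)))"

definition input_code :: "nat set \<Rightarrow> nat set \<Rightarrow> nat set \<Rightarrow> nat set
    \<Rightarrow> (nat \<times> (nat option \<times> nat) \<times> nat) set
    \<Rightarrow> ((nat \<times> nat) \<times> (nat \<times> nat) \<times> (nat \<times> nat)) set \<Rightarrow> nat" where
  "input_code Sig Q I F \<Delta> \<Delta>2 = list_encode [enc_set Sig, enc_set Q, enc_set I, enc_set F,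
     enc_set (enc_trans ` \<Delta>), enc_set (enc_trans2 ` \<Delta>2)]"

definition output_code :: "nat set \<Rightarrow> (nat \<times> nat \<Rightarrow> (nat \<times> nat) option)
    \<Rightarrow> (nat \<times> nat \<Rightarrow> (nat \<times> nat) option) \<Rightarrow> nat" where
  "output_code Q \<rho> \<nu> = enc_set ((\<lambda>q. prod_encode (prod_encode q,
       prod_encode (enc_opt (map_option prod_encode (\<rho> q)), enc_opt (map_option prod_encode (\<nu> q)))))
     ` (Q \<times> Q))"

end

theory Submission
  imports Defs "HOL-Library.Nat_Bijection"
begin

lemma ev_proj: "i < length xs \<Longrightarrow> xs ! i = v \<Longrightarrow> eval_recf (RProj i) xs v"
  using eval_recf.intros(3) by blast

lemma ev_comp1: "eval_recf g xs y \<Longrightarrow> eval_recf h [y] z \<Longrightarrow> eval_recf (RComp h [g]) xs z"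
  by (rule eval_recf.intros(4)[where ys="[y]"]) auto

lemma ev_comp2: "eval_recf g1 xs y1 \<Longrightarrow> eval_recf g2 xs y2 \<Longrightarrow> eval_recf h [y1, y2] z
   \<Longrightarrow> eval_recf (RComp h [g1, g2]) xs z"
  by (rule eval_recf.intros(4)[where ys="[y1, y2]"]) auto

lemma ev_comp3: "eval_recf g1 xs y1 \<Longrightarrow> eval_recf g2 xs y2 \<Longrightarrow> eval_recf g3 xs y3
   \<Longrightarrow> eval_recf h [y1, y2, y3] z \<Longrightarrow> eval_recf (RComp h [g1, g2, g3]) xs z"
  by (rule eval_recf.intros(4)[where ys="[y1, y2, y3]"]) auto

lemma ev_zero: "eval_recf RZero xs 0"
  by (rule eval_recf.intros(1))

lemma ev_suc: "eval_recf RSuc [x] (Suc x)"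
  by (rule eval_recf.intros(2))

lemma ev_sucI: "v = Suc x \<Longrightarrow> eval_recf RSuc [x] v"
  using ev_suc by simp

lemma ev_prim:
  assumes g: "eval_recf g xs G" and h: "\<And>y n. eval_recf h (y # n # xs) (H n y)"
  shows "eval_recf (RPrim g h) (n # xs) (rec_nat G H n)"
proof (induction n)
  case 0 then show ?case using g by (simp add: eval_recf.intros(5))
next
  case (Suc n) then show ?case using h by (simp add: eval_recf.intros(6))
qed

definition add_r where "add_r = RPrim (RProj 0) (RComp RSuc [RProj 0])"

lemma ev_add: "eval_recf add_r [a, b] (a + b)"
proof -
  have "eval_recf add_r [a, b] (rec_nat b (\<lambda>n y. Suc y) a)"
    unfolding add_r_def
    by (rule ev_prim) (auto intro!: ev_proj ev_comp1 ev_sucI)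
  moreover have "rec_nat b (\<lambda>n y. Suc y) a = a + b" by (induct a) auto
  ultimately show ?thesis by simp
qed

lemma ev_addI: "v = a + b \<Longrightarrow> eval_recf add_r [a, b] v"
  using ev_add by simp

definition tri_r where "tri_r = RPrim RZero (RComp add_r [RProj 0, RComp RSuc [RProj 1]])"

lemma ev_tri: "eval_recf tri_r [n] (triangle n)"
proof -
  have "eval_recf tri_r [n] (rec_nat 0 (\<lambda>n y. y + Suc n) n)"
    unfolding tri_r_def
    by (rule ev_prim) (auto intro!: ev_proj ev_comp1 ev_comp2 ev_sucI ev_zero ev_addI)
  moreover have "rec_nat 0 (\<lambda>n y. y + Suc n) n = triangle n" by (induct n) auto
  ultimately show ?thesis by simp
qed

lemma ev_triI: "v = triangle n \<Longrightarrow> eval_recf tri_r [n] v"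
  using ev_tri by simp

definition pred_r where "pred_r = RPrim RZero (RProj 1)"

lemma ev_pred: "eval_recf pred_r [n] (n - 1)"
proof -
  have "eval_recf pred_r [n] (rec_nat 0 (\<lambda>n y. n) n)"
    unfolding pred_r_def
    by (rule ev_prim) (auto intro!: ev_proj ev_zero)
  moreover have "rec_nat 0 (\<lambda>n y. n) n = n - 1" by (cases n) auto
  ultimately show ?thesis by simp
qed

lemma ev_predI: "v = n - 1 \<Longrightarrow> eval_recf pred_r [n] v"
  using ev_pred by simp

definition subrev_r where "subrev_r = RPrim (RProj 0) (RComp pred_r [RProj 0])"
definition sub_r where "sub_r = RComp subrev_r [RProj 1, RProj 0]"

lemma ev_sub: "eval_recf sub_r [a, b] (a - b)"
proof -
  have "eval_recf subrev_r [b, a] (rec_nat a (\<lambda>n y. y - 1) b)"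
    unfolding subrev_r_def
    by (rule ev_prim) (auto intro!: ev_proj ev_comp1 ev_predI)
  moreover have "rec_nat a (\<lambda>n y. y - 1) b = a - b" by (induct b) auto
  ultimately have "eval_recf subrev_r [b, a] (a - b)" by simp
  then show ?thesis unfolding sub_r_def
    by (auto intro!: ev_comp2 ev_proj)
qed

lemma ev_subI: "v = a - b \<Longrightarrow> eval_recf sub_r [a, b] v"
  using ev_sub by simp

definition if_r where "if_r = RPrim (RProj 0) (RProj 3)"

lemma ev_if: "eval_recf if_r [c, a, b] (if c = 0 then a else b)"
proof -
  have "eval_recf if_r [c, a, b] (rec_nat a (\<lambda>n y. b) c)"
    unfolding if_r_def
    by (rule ev_prim) (auto intro!: ev_proj)
  moreover have "rec_nat a (\<lambda>n y. b) c = (if c = 0 then a else b)" by (cases c) auto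
  ultimately show ?thesis by simp
qed

definition pe_r where "pe_r = RComp add_r [RComp tri_r [RComp add_r [RProj 0, RProj 1]], RProj 0]"

lemma ev_pe: "eval_recf pe_r [a, b] (prod_encode (a, b))"
  unfolding pe_r_def prod_encode_def
  by (auto intro!: ev_comp1 ev_comp2 ev_proj ev_addI ev_triI)

definition one_r where "one_r = RComp RSuc [RZero]"

lemma ev_one: "eval_recf one_r xs 1"
  unfolding one_r_def by (auto intro!: ev_comp1 ev_zero ev_sucI)

definition le_r where "le_r = RComp sub_r [one_r, RComp sub_r [RProj 0, RProj 1]]"

lemma ev_le: "eval_recf le_r [a, b] (if a \<le> b then 1 else 0)"
proof -
  have "eval_recf le_r [a, b] (1 - (a - b))"
    unfolding le_r_def by (auto intro!: ev_comp2 ev_proj ev_subI ev_one)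
  then show ?thesis by (cases "a \<le> b") auto
qed

definition cnt_r where
  "cnt_r = RPrim RZero (RComp add_r [RProj 0, RComp le_r [RComp tri_r [RComp RSuc [RProj 1]], RProj 2]])"

definition cntf :: "nat \<Rightarrow> nat \<Rightarrow> nat" where
  "cntf z k = rec_nat 0 (\<lambda>n y. y + (if triangle (Suc n) \<le> z then 1 else 0)) k"

lemma ev_cnt: "eval_recf cnt_r [k, z] (cntf z k)"
  unfolding cnt_r_def cntf_def
  by (rule ev_prim) (auto intro!: ev_comp1 ev_comp2 ev_proj ev_addI ev_triI ev_le ev_zero ev_sucI split del: if_split)

lemma triangle_mono: "i \<le> j \<Longrightarrow> triangle i \<le> triangle j"
  by (induct j) (auto simp: le_Suc_eq)

lemma triangle_ge: "k \<le> triangle k"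
  by (induct k) auto

lemma cntf_val:
  assumes "prod_decode z = (m, n)"
  shows "cntf z z = m + n"
proof -
  have z: "z = triangle (m + n) + m" using assms prod_decode_inverse[of z]
    by (simp add: prod_encode_def)
  have key: "triangle j \<le> z \<longleftrightarrow> j \<le> m + n" for j
  proof
    assume "triangle j \<le> z"
    show "j \<le> m + n"
    proof (rule ccontr)
      assume "\<not> j \<le> m + n"
      then have "triangle (Suc (m + n)) \<le> triangle j" by (intro triangle_mono) auto
      then show False using \<open>triangle j \<le> z\<close> z by simp
    qed
  next
    assume "j \<le> m + n"
    then show "triangle j \<le> z" using triangle_mono[OF \<open>j \<le> m + n\<close>] z by simp
  qed
  have "cntf z k = min k (m + n)" for k
  proof (induct k)
    case 0 show ?case by (simp add: cntf_def)
  next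
    case (Suc k)
    have "cntf z (Suc k) = cntf z k + (if triangle (Suc k) \<le> z then 1 else 0)"
      by (simp add: cntf_def del: triangle_Suc)
    then show ?case using Suc by (simp add: key del: triangle_Suc)
  qed
  moreover have "m + n \<le> z" using z triangle_ge[of "m+n"] by simp
  ultimately show ?thesis by simp
qed

lemma prod_decode_cnt:
  "prod_decode z = (z - triangle (cntf z z), cntf z z - (z - triangle (cntf z z)))"
proof -
  obtain m n where mn: "prod_decode z = (m, n)" by (cases "prod_decode z")
  have z: "z = triangle (m + n) + m" using mn prod_decode_inverse[of z]
    by (simp add: prod_encode_def)
  show ?thesis using cntf_val[OF mn] mn z by simp
qed

definition fst_r where "fst_r = RComp sub_r [RProj 0, RComp tri_r [RComp cnt_r [RProj 0, RProj 0]]]"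
definition snd_r where "snd_r = RComp sub_r [RComp cnt_r [RProj 0, RProj 0], fst_r]"

lemma ev_fst: "eval_recf fst_r [z] (fst (prod_decode z))"
proof -
  let ?c = "cntf z z"
  have "eval_recf fst_r [z] (z - triangle ?c)"
    unfolding fst_r_def
    by (rule ev_comp2, rule ev_proj, simp, simp, rule ev_comp1, rule ev_comp2, (rule ev_proj, simp, simp)+,
        rule ev_cnt, rule ev_tri, rule ev_sub)
  then show ?thesis by (subst prod_decode_cnt) simp
qed

lemma ev_snd: "eval_recf snd_r [z] (snd (prod_decode z))"
proof -
  let ?c = "cntf z z"
  have f: "eval_recf fst_r [z] (z - triangle ?c)" using ev_fst[of z] by (subst (asm) prod_decode_cnt) simp
  have "eval_recf snd_r [z] (?c - (z - triangle ?c))"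
    unfolding snd_r_def
    by (rule ev_comp2, rule ev_comp2, (rule ev_proj, simp, simp)+, rule ev_cnt, rule f, rule ev_sub)
  then show ?thesis by (subst prod_decode_cnt) simp
qed



definition comp1 :: "(nat \<Rightarrow> nat) \<Rightarrow> bool" where
  "comp1 F \<longleftrightarrow> (\<exists>r. \<forall>x. eval_recf r [x] (F x))"

lemma comp1I: "(\<And>x. eval_recf r [x] (F x)) \<Longrightarrow> comp1 F"
  unfolding comp1_def by blast

lemma comp1_prog1:
  assumes p: "\<And>a. eval_recf p [a] (B a)" and F: "comp1 F"
  shows "comp1 (\<lambda>x. B (F x))"
proof -
  obtain rF where rF: "\<And>x. eval_recf rF [x] (F x)" using F unfolding comp1_def by blast
  show ?thesis by (rule comp1I[where r="RComp p [rF]"]) (rule ev_comp1[OF rF p])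
qed

lemma comp1_prog2:
  assumes p: "\<And>a b. eval_recf p [a, b] (B a b)" and F: "comp1 F" and G: "comp1 G"
  shows "comp1 (\<lambda>x. B (F x) (G x))"
proof -
  obtain rF where rF: "\<And>x. eval_recf rF [x] (F x)" using F unfolding comp1_def by blast
  obtain rG where rG: "\<And>x. eval_recf rG [x] (G x)" using G unfolding comp1_def by blast
  show ?thesis by (rule comp1I[where r="RComp p [rF, rG]"]) (rule ev_comp2[OF rF rG p])
qed

lemma comp1_prog3:
  assumes p: "\<And>a b c. eval_recf p [a, b, c] (B a b c)" and F: "comp1 F" and G: "comp1 G" and H: "comp1 H"
  shows "comp1 (\<lambda>x. B (F x) (G x) (H x))"
proof -
  obtain rF where rF: "\<And>x. eval_recf rF [x] (F x)" using F unfolding comp1_def by blast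
  obtain rG where rG: "\<And>x. eval_recf rG [x] (G x)" using G unfolding comp1_def by blast
  obtain rH where rH: "\<And>x. eval_recf rH [x] (H x)" using H unfolding comp1_def by blast
  show ?thesis by (rule comp1I[where r="RComp p [rF, rG, rH]"]) (rule ev_comp3[OF rF rG rH p])
qed

lemma c_id: "comp1 (\<lambda>x. x)"
  by (rule comp1I[where r="RProj 0"]) (rule ev_proj, auto)

lemma c_comp: "comp1 F \<Longrightarrow> comp1 G \<Longrightarrow> comp1 (\<lambda>x. F (G x))"
proof -
  assume F: "comp1 F" and G: "comp1 G"
  obtain rF where rF: "\<And>x. eval_recf rF [x] (F x)" using F unfolding comp1_def by blast
  show ?thesis by (rule comp1_prog1[OF rF G])
qed

lemma c_Suc: "comp1 F \<Longrightarrow> comp1 (\<lambda>x. Suc (F x))"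
  by (rule comp1_prog1[OF ev_suc])

lemma c_const: "comp1 (\<lambda>x. c)"
proof (induct c)
  case 0 show ?case by (rule comp1I[where r=RZero]) (rule ev_zero)
next
  case (Suc c) then show ?case by (rule c_Suc)
qed

lemma c_add: "comp1 F \<Longrightarrow> comp1 G \<Longrightarrow> comp1 (\<lambda>x. F x + G x)"
  by (rule comp1_prog2[OF ev_add])

lemma c_sub: "comp1 F \<Longrightarrow> comp1 G \<Longrightarrow> comp1 (\<lambda>x. F x - G x)"
  by (rule comp1_prog2[OF ev_sub])

lemma c_pe: "comp1 F \<Longrightarrow> comp1 G \<Longrightarrow> comp1 (\<lambda>x. prod_encode (F x, G x))"
  by (rule comp1_prog2[OF ev_pe])

lemma c_fst: "comp1 F \<Longrightarrow> comp1 (\<lambda>x. fst (prod_decode (F x)))"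
  by (rule comp1_prog1[OF ev_fst])

lemma c_snd: "comp1 F \<Longrightarrow> comp1 (\<lambda>x. snd (prod_decode (F x)))"
  by (rule comp1_prog1[OF ev_snd])

lemma c_ifz: "comp1 C \<Longrightarrow> comp1 A \<Longrightarrow> comp1 B \<Longrightarrow> comp1 (\<lambda>x. if C x = 0 then A x else B x)"
  by (rule comp1_prog3[OF ev_if])

definition cb :: "(nat \<Rightarrow> bool) \<Rightarrow> bool" where
  "cb P \<longleftrightarrow> comp1 (\<lambda>x. if P x then 1 else 0)"

lemma c_if: "cb P \<Longrightarrow> comp1 A \<Longrightarrow> comp1 B \<Longrightarrow> comp1 (\<lambda>x. if P x then A x else B x)"
proof -
  assume "cb P" "comp1 A" "comp1 B"
  then have "comp1 (\<lambda>x. if (if P x then 1 else 0) = (0::nat) then B x else A x)"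
    unfolding cb_def by (intro c_ifz)
  moreover have "(\<lambda>x. if (if P x then 1 else 0) = (0::nat) then B x else A x) = (\<lambda>x. if P x then A x else B x)"
    by auto
  ultimately show ?thesis by simp
qed

lemma cb_eq: "comp1 F \<Longrightarrow> comp1 G \<Longrightarrow> cb (\<lambda>x. F x = G x)"
proof -
  assume "comp1 F" "comp1 G"
  then have "comp1 (\<lambda>x. if (F x - G x) + (G x - F x) = 0 then 1 else 0)"
    by (intro c_ifz c_add c_sub c_const)
  moreover have "(F x - G x) + (G x - F x) = 0 \<longleftrightarrow> F x = G x" for x by auto
  ultimately show ?thesis unfolding cb_def by simp
qed

lemma cb_le: "comp1 F \<Longrightarrow> comp1 G \<Longrightarrow> cb (\<lambda>x. F x \<le> G x)"
proof -
  assume "comp1 F" "comp1 G"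
  then have "comp1 (\<lambda>x. if F x - G x = 0 then 1 else 0)"
    by (intro c_ifz c_add c_sub c_const)
  then show ?thesis unfolding cb_def by simp
qed

lemma cb_not: "cb P \<Longrightarrow> cb (\<lambda>x. \<not> P x)"
proof -
  assume "cb P"
  then have "comp1 (\<lambda>x. if P x then 0 else 1)" by (intro c_if c_const)
  moreover have "(\<lambda>x. if P x then 0 else 1) = (\<lambda>x. if \<not> P x then 1 else (0::nat))" by auto
  ultimately show ?thesis unfolding cb_def by simp
qed

lemma cb_conj: "cb P \<Longrightarrow> cb Q \<Longrightarrow> cb (\<lambda>x. P x \<and> Q x)"
proof -
  assume "cb P" "cb Q"
  then have "comp1 (\<lambda>x. if P x then (if Q x then 1 else 0) else 0)"
    by (intro c_if c_const)
  moreover have "(\<lambda>x. if P x then (if Q x then 1 else 0) else 0) = (\<lambda>x. if P x \<and> Q x then 1 else (0::nat))" by auto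
  ultimately show ?thesis unfolding cb_def by simp
qed

lemma cb_disj: "cb P \<Longrightarrow> cb Q \<Longrightarrow> cb (\<lambda>x. P x \<or> Q x)"
proof -
  assume "cb P" "cb Q"
  then have "comp1 (\<lambda>x. if P x then 1 else (if Q x then 1 else 0))"
    by (intro c_if c_const)
  moreover have "(\<lambda>x. if P x then 1 else (if Q x then 1 else 0)) = (\<lambda>x. if P x \<or> Q x then 1 else (0::nat))" by auto
  ultimately show ?thesis unfolding cb_def by simp
qed

lemma rec_nat_funpow: "rec_nat a (\<lambda>i y. g y) n = (g ^^ n) a"
  by (induct n) auto

lemma c_rec:
  assumes A: "comp1 A" and N: "comp1 N"
    and H: "comp1 (\<lambda>z. H (fst (prod_decode z)) (fst (prod_decode (snd (prod_decode z))))
                         (snd (prod_decode (snd (prod_decode z)))))"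
  shows "comp1 (\<lambda>x. rec_nat (A x) (\<lambda>i y. H x i y) (N x))"
proof -
  obtain rA where rA: "\<And>x. eval_recf rA [x] (A x)" using A unfolding comp1_def by blast
  obtain rN where rN: "\<And>x. eval_recf rN [x] (N x)" using N unfolding comp1_def by blast
  obtain rH where rH: "\<And>x. eval_recf rH [x] (H (fst (prod_decode x)) (fst (prod_decode (snd (prod_decode x))))
                         (snd (prod_decode (snd (prod_decode x)))))" using H unfolding comp1_def by blast
  define h where "h = RComp rH [RComp pe_r [RProj 2, RComp pe_r [RProj 1, RProj 0]]]"
  have h: "eval_recf h [y, n, x] (H x n y)" for y n x
  proof -
    have "eval_recf (RComp pe_r [RProj 2, RComp pe_r [RProj 1, RProj 0]]) [y, n, x]
            (prod_encode (x, prod_encode (n, y)))"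
      by (rule ev_comp2, rule ev_proj, simp, simp, rule ev_comp2, (rule ev_proj, simp, simp)+,
          rule ev_pe, rule ev_pe)
    from ev_comp1[OF this rH] show ?thesis unfolding h_def by simp
  qed
  have "eval_recf (RPrim rA h) [n, x] (rec_nat (A x) (\<lambda>i y. H x i y) n)" for n x
    by (rule ev_prim[OF rA h])
  then show ?thesis
    by (intro comp1I[where r="RComp (RPrim rA h) [rN, RProj 0]"] ev_comp2[OF rN] ev_proj) auto
qed

lemma length_list_decode_le: "length (list_decode c) \<le> c"
proof (induct c rule: list_decode.induct)
  case 1 then show ?case by simp
next
  case (2 n)
  obtain x y where xy: "prod_decode n = (x, y)" by (cases "prod_decode n")
  have "y \<le> n" using le_prod_encode_2[of y x] prod_decode_inverse[of n] xy by simp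
  then show ?case using 2[OF xy[symmetric]] xy by simp
qed

lemma list_decode_Suc: "list_decode (Suc n) = fst (prod_decode n) # list_decode (snd (prod_decode n))"
  by (simp split: prod.split)

definition fstp :: "(nat \<Rightarrow> nat \<Rightarrow> nat \<Rightarrow> nat) \<Rightarrow> nat \<Rightarrow> nat \<Rightarrow> nat" where
  "fstp S x st = (if fst (prod_decode st) = 0 then st else
      prod_encode (snd (prod_decode (fst (prod_decode st) - 1)),
                   S x (fst (prod_decode (fst (prod_decode st) - 1))) (snd (prod_decode st))))"

lemma fstp_iter:
  "length (list_decode c) \<le> n \<Longrightarrow>
   (fstp S x ^^ n) (prod_encode (c, a)) = prod_encode (0, foldl (\<lambda>acc y. S x y acc) a (list_decode c))"
proof (induct n arbitrary: c a)
  case 0 then show ?case using list_decode_inverse[of c] by simp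
next
  case (Suc n)
  show ?case
  proof (cases c)
    case 0
    have "(fstp S x ^^ m) (prod_encode (0, a)) = prod_encode (0, a)" for m
      by (induct m) (auto simp: fstp_def)
    then show ?thesis using 0 by (simp del: funpow.simps)
  next
    case (Suc c')
    have "(fstp S x ^^ Suc n) (prod_encode (c, a)) = (fstp S x ^^ n) (fstp S x (prod_encode (c, a)))"
      by (simp add: funpow_Suc_right del: funpow.simps)
    also have "fstp S x (prod_encode (c, a)) =
       prod_encode (snd (prod_decode c'), S x (fst (prod_decode c')) a)"
      using Suc by (simp add: fstp_def)
    also have "(fstp S x ^^ n) \<dots> = prod_encode (0, foldl (\<lambda>acc y. S x y acc) (S x (fst (prod_decode c')) a)
               (list_decode (snd (prod_decode c'))))"
      using Suc.prems Suc by (intro Suc.hyps) (simp add: list_decode_Suc del: list_decode.simps)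
    finally show ?thesis using Suc by (simp add: list_decode_Suc del: list_decode.simps)
  qed
qed

lemma c_foldl:
  assumes S: "comp1 (\<lambda>z. S (fst (prod_decode z)) (fst (prod_decode (snd (prod_decode z))))
                         (snd (prod_decode (snd (prod_decode z)))))"
    and A: "comp1 A" and C: "comp1 C"
  shows "comp1 (\<lambda>x. foldl (\<lambda>acc y. S x y acc) (A x) (list_decode (C x)))"
proof -
  let ?G = "\<lambda>z. prod_encode (fst (prod_decode z),
              prod_encode (fst (prod_decode (fst (prod_decode (snd (prod_decode (snd (prod_decode z))))) - 1)),
                           snd (prod_decode (snd (prod_decode (snd (prod_decode z)))))))"
  have G: "comp1 ?G" by (intro c_pe c_fst c_snd c_sub c_id c_const)
  have S': "comp1 (\<lambda>z. S (fst (prod_decode z)) (fst (prod_decode (fst (prod_decode (snd (prod_decode (snd (prod_decode z))))) - 1)))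
                         (snd (prod_decode (snd (prod_decode (snd (prod_decode z)))))))"
    using c_comp[OF S G] by simp
  have "comp1 (\<lambda>x. snd (prod_decode (rec_nat (prod_encode (C x, A x)) (\<lambda>i st. fstp S x st) (C x))))"
    unfolding fstp_def
    by (intro c_snd c_rec c_pe A C c_if cb_eq c_fst c_const c_id c_sub S')
  moreover have "snd (prod_decode (rec_nat (prod_encode (C x, A x)) (\<lambda>i st. fstp S x st) (C x)))
     = foldl (\<lambda>acc y. S x y acc) (A x) (list_decode (C x))" for x
    by (simp add: rec_nat_funpow fstp_iter length_list_decode_le)
  ultimately show ?thesis by simp
qed



abbreviation P :: "nat \<Rightarrow> nat \<Rightarrow> nat" where "P a b \<equiv> prod_encode (a, b)"
abbreviation p1 :: "nat \<Rightarrow> nat" where "p1 z \<equiv> fst (prod_decode z)"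
abbreviation p2 :: "nat \<Rightarrow> nat" where "p2 z \<equiv> snd (prod_decode z)"

lemma c_tup2: "comp1 (\<lambda>z. F (p1 z) (p2 z)) \<Longrightarrow> comp1 A \<Longrightarrow> comp1 B \<Longrightarrow> comp1 (\<lambda>x. F (A x) (B x))"
  using c_comp[of "\<lambda>z. F (p1 z) (p2 z)" "\<lambda>x. P (A x) (B x)"] c_pe[of A B] by simp

lemma c_tup3: "comp1 (\<lambda>z. F (p1 z) (p1 (p2 z)) (p2 (p2 z))) \<Longrightarrow> comp1 A \<Longrightarrow> comp1 B \<Longrightarrow> comp1 C
  \<Longrightarrow> comp1 (\<lambda>x. F (A x) (B x) (C x))"
  using c_comp[of "\<lambda>z. F (p1 z) (p1 (p2 z)) (p2 (p2 z))" "\<lambda>x. P (A x) (P (B x) (C x))"] c_pe[of B C] c_pe[of A "\<lambda>x. P (B x) (C x)"]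
  by simp

lemma c_tup4: "comp1 (\<lambda>z. F (p1 z) (p1 (p2 z)) (p1 (p2 (p2 z))) (p2 (p2 (p2 z)))) \<Longrightarrow> comp1 A \<Longrightarrow> comp1 B \<Longrightarrow> comp1 C
  \<Longrightarrow> comp1 D \<Longrightarrow> comp1 (\<lambda>x. F (A x) (B x) (C x) (D x))"
  using c_comp[of "\<lambda>z. F (p1 z) (p1 (p2 z)) (p1 (p2 (p2 z))) (p2 (p2 (p2 z)))" "\<lambda>x. P (A x) (P (B x) (P (C x) (D x)))"]
    c_pe[of C D] c_pe[of B "\<lambda>x. P (C x) (D x)"] c_pe[of A "\<lambda>x. P (B x) (P (C x) (D x))"]
  by simp

lemmas cbase = c_id c_const c_Suc c_add c_sub c_pe c_fst c_snd c_if cb_eq cb_le cb_not cb_conj cb_disj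

definition cons_c :: "nat \<Rightarrow> nat \<Rightarrow> nat" where "cons_c a c = Suc (P a c)"

lemma c_cons: "comp1 A \<Longrightarrow> comp1 C \<Longrightarrow> comp1 (\<lambda>x. cons_c (A x) (C x))"
  unfolding cons_c_def by (intro cbase)

definition lookup :: "nat \<Rightarrow> nat \<Rightarrow> nat" where
  "lookup k R = foldl (\<lambda>acc y. if acc = 0 then (if p1 y = k then Suc (p2 y) else 0) else acc) 0 (list_decode R)"

lemma c_lookup: "comp1 K \<Longrightarrow> comp1 R \<Longrightarrow> comp1 (\<lambda>x. lookup (K x) (R x))"
proof -
  have "comp1 (\<lambda>z. lookup (p1 z) (p2 z))"
    unfolding lookup_def by (intro c_foldl cbase)
  then show "comp1 K \<Longrightarrow> comp1 R \<Longrightarrow> comp1 (\<lambda>x. lookup (K x) (R x))" by (rule c_tup2)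
qed

definition memn :: "nat \<Rightarrow> nat \<Rightarrow> nat" where
  "memn k L = foldl (\<lambda>acc y. if y = k then 1 else acc) 0 (list_decode L)"

lemma c_memn: "comp1 K \<Longrightarrow> comp1 R \<Longrightarrow> comp1 (\<lambda>x. memn (K x) (R x))"
proof -
  have "comp1 (\<lambda>z. memn (p1 z) (p2 z))"
    unfolding memn_def by (intro c_foldl cbase)
  then show "comp1 K \<Longrightarrow> comp1 R \<Longrightarrow> comp1 (\<lambda>x. memn (K x) (R x))" by (rule c_tup2)
qed

definition src :: "nat \<Rightarrow> nat \<Rightarrow> nat" where "src d t = (if d = 0 then p1 t else p2 (p2 t))"
definition dst :: "nat \<Rightarrow> nat \<Rightarrow> nat" where "dst d t = (if d = 0 then p2 (p2 t) else p1 t)"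

lemma c_src: "comp1 D \<Longrightarrow> comp1 T \<Longrightarrow> comp1 (\<lambda>x. src (D x) (T x))"
  unfolding src_def by (intro cbase)
lemma c_dst: "comp1 D \<Longrightarrow> comp1 T \<Longrightarrow> comp1 (\<lambda>x. dst (D x) (T x))"
  unfolding dst_def by (intro cbase)

definition initm :: "nat \<Rightarrow> nat \<Rightarrow> nat" where
  "initm V v = foldl (\<lambda>acc a. foldl (\<lambda>acc' b. cons_c (P (P a b) v) acc') acc (list_decode V)) 0 (list_decode V)"

lemma c_initm: "comp1 V \<Longrightarrow> comp1 W \<Longrightarrow> comp1 (\<lambda>x. initm (V x) (W x))"
proof -
  have "comp1 (\<lambda>z. initm (p1 z) (p2 z))"
    unfolding initm_def by (intro c_foldl c_cons cbase)
  then show "comp1 V \<Longrightarrow> comp1 W \<Longrightarrow> comp1 (\<lambda>x. initm (V x) (W x))" by (rule c_tup2)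
qed

definition sortset :: "nat \<Rightarrow> nat" where
  "sortset L = rec_nat 0 (\<lambda>n S. if memn (L - n) L = 0 then S else cons_c (L - n) S) (Suc L)"

lemma c_sortset: "comp1 L \<Longrightarrow> comp1 (\<lambda>x. sortset (L x))"
proof -
  have "comp1 (\<lambda>z. sortset z)"
    unfolding sortset_def by (intro c_rec c_cons c_memn cbase)
  then show "comp1 L \<Longrightarrow> comp1 (\<lambda>x. sortset (L x))" using c_comp by blast
qed

definition hdc :: "nat \<Rightarrow> nat" where "hdc c = p1 (c - 1)"
definition tlc :: "nat \<Rightarrow> nat" where "tlc c = p2 (c - 1)"

lemma c_hdc: "comp1 C \<Longrightarrow> comp1 (\<lambda>x. hdc (C x))" unfolding hdc_def by (intro cbase)
lemma c_tlc: "comp1 C \<Longrightarrow> comp1 (\<lambda>x. tlc (C x))" unfolding tlc_def by (intro cbase)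

locale alg =
  fixes ft eqz et :: "nat \<Rightarrow> nat" and e :: nat
begin

definition mulF :: "nat \<Rightarrow> nat \<Rightarrow> nat" where
  "mulF v l = P (ft (P (p1 v) (p1 l))) (ft (P (p2 v) (p2 l)))"

definition stepR :: "nat \<Rightarrow> nat \<Rightarrow> nat \<Rightarrow> nat" where
  "stepR d t acc = (if lookup (src d t) acc \<noteq> 0 \<and> lookup (dst d t) acc = 0
      then cons_c (P (dst d t) (mulF (lookup (src d t) acc - 1) (p1 (p2 t)))) acc else acc)"

definition round :: "nat \<Rightarrow> nat \<Rightarrow> nat \<Rightarrow> nat" where
  "round d D2 R = foldl (\<lambda>acc t. stepR d t acc) R (list_decode D2)"

definition closure :: "nat \<Rightarrow> nat \<Rightarrow> nat \<Rightarrow> nat \<Rightarrow> nat" where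
  "closure d D2 R0 N = rec_nat R0 (\<lambda>i R. round d D2 R) N"

definition rhoc :: "nat \<Rightarrow> nat \<Rightarrow> nat \<Rightarrow> nat" where
  "rhoc Rf Rb k = (if lookup k Rb = 0 then 0 else lookup k Rf)"

definition nuc :: "nat \<Rightarrow> nat" where
  "nuc v = (if v = 0 then 0 else if p1 (v - 1) = p2 (v - 1) then Suc (P e e)
            else if eqz (v - 1) = 0 then 0 else Suc (et (v - 1)))"

definition entry :: "nat \<Rightarrow> nat \<Rightarrow> nat \<Rightarrow> nat" where
  "entry Rf Rb k = P k (P (rhoc Rf Rb k) (nuc (rhoc Rf Rb k)))"

definition Lq :: "nat \<Rightarrow> nat \<Rightarrow> nat \<Rightarrow> nat" where
  "Lq Qc Rf Rb = foldl (\<lambda>acc a. foldl (\<lambda>acc' b. cons_c (entry Rf Rb (P a b)) acc') acc (list_decode Qc)) 0 (list_decode Qc)"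

definition Nb :: "nat \<Rightarrow> nat" where "Nb c = Suc (P c c)"

definition Rfc :: "nat \<Rightarrow> nat" where
  "Rfc c = closure 0 (hdc (tlc (tlc (tlc (tlc (tlc c)))))) (initm (hdc (tlc (tlc c))) (P e e)) (Nb c)"

definition Rbc :: "nat \<Rightarrow> nat" where
  "Rbc c = closure 1 (hdc (tlc (tlc (tlc (tlc (tlc c)))))) (initm (hdc (tlc (tlc (tlc c)))) 0) (Nb c)"

definition main :: "nat \<Rightarrow> nat" where
  "main c = sortset (Lq (hdc (tlc c)) (Rfc c) (Rbc c))"

end

locale alg_comp = alg +
  assumes cft: "comp1 ft" and ceqz: "comp1 eqz" and cet: "comp1 et"
begin

lemma c_ft: "comp1 F \<Longrightarrow> comp1 (\<lambda>x. ft (F x))" using c_comp[OF cft] .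
lemma c_eqz: "comp1 F \<Longrightarrow> comp1 (\<lambda>x. eqz (F x))" using c_comp[OF ceqz] .
lemma c_et: "comp1 F \<Longrightarrow> comp1 (\<lambda>x. et (F x))" using c_comp[OF cet] .

lemma c_mulF: "comp1 A \<Longrightarrow> comp1 B \<Longrightarrow> comp1 (\<lambda>x. mulF (A x) (B x))"
  unfolding mulF_def by (intro c_ft cbase)

lemma c_round: "comp1 D \<Longrightarrow> comp1 T \<Longrightarrow> comp1 R \<Longrightarrow> comp1 (\<lambda>x. round (D x) (T x) (R x))"
proof -
  have "comp1 (\<lambda>z. round (p1 z) (p1 (p2 z)) (p2 (p2 z)))"
    unfolding round_def stepR_def
    by (intro c_foldl c_cons c_mulF c_lookup c_src c_dst cbase)
  then show "comp1 D \<Longrightarrow> comp1 T \<Longrightarrow> comp1 R \<Longrightarrow> comp1 (\<lambda>x. round (D x) (T x) (R x))" by (rule c_tup3)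
qed

lemma c_closure: "comp1 D \<Longrightarrow> comp1 T \<Longrightarrow> comp1 R \<Longrightarrow> comp1 N \<Longrightarrow> comp1 (\<lambda>x. closure (D x) (T x) (R x) (N x))"
proof -
  have "comp1 (\<lambda>z. closure (p1 z) (p1 (p2 z)) (p1 (p2 (p2 z))) (p2 (p2 (p2 z))))"
    unfolding closure_def by (intro c_rec c_round cbase)
  then show "comp1 D \<Longrightarrow> comp1 T \<Longrightarrow> comp1 R \<Longrightarrow> comp1 N \<Longrightarrow> comp1 (\<lambda>x. closure (D x) (T x) (R x) (N x))"
    by (rule c_tup4)
qed

lemma c_nuc: "comp1 V \<Longrightarrow> comp1 (\<lambda>x. nuc (V x))"
  unfolding nuc_def by (intro c_eqz c_et cbase)

lemma c_rhoc: "comp1 A \<Longrightarrow> comp1 B \<Longrightarrow> comp1 K \<Longrightarrow> comp1 (\<lambda>x. rhoc (A x) (B x) (K x))"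
  unfolding rhoc_def by (intro c_lookup cbase)

lemma c_entry: "comp1 A \<Longrightarrow> comp1 B \<Longrightarrow> comp1 K \<Longrightarrow> comp1 (\<lambda>x. entry (A x) (B x) (K x))"
  unfolding entry_def by (intro c_rhoc c_nuc cbase)

lemma c_Lq: "comp1 Q \<Longrightarrow> comp1 A \<Longrightarrow> comp1 B \<Longrightarrow> comp1 (\<lambda>x. Lq (Q x) (A x) (B x))"
proof -
  have "comp1 (\<lambda>z. Lq (p1 z) (p1 (p2 z)) (p2 (p2 z)))"
    unfolding Lq_def by (intro c_foldl c_cons c_entry cbase)
  then show "comp1 Q \<Longrightarrow> comp1 A \<Longrightarrow> comp1 B \<Longrightarrow> comp1 (\<lambda>x. Lq (Q x) (A x) (B x))" by (rule c_tup3)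
qed

lemma c_main: "comp1 main"
proof -
  have "comp1 (\<lambda>c. main c)"
    unfolding main_def Rfc_def Rbc_def Nb_def
    by (intro c_sortset c_Lq c_closure c_initm c_hdc c_tlc cbase)
  then show ?thesis by simp
qed

end



lemma list_decode_cons_c[simp]: "list_decode (cons_c a c) = a # list_decode c"
  by (simp add: cons_c_def)

lemma lookup_fold:
  "foldl (\<lambda>acc y. if acc = 0 then (if p1 y = k then Suc (p2 y) else 0) else acc) a xs
   = (if a = 0 then (case find (\<lambda>y. p1 y = k) xs of None \<Rightarrow> 0 | Some y \<Rightarrow> Suc (p2 y)) else a)"
  by (induct xs arbitrary: a) auto

lemma lookup_find: "lookup k R = (case find (\<lambda>y. p1 y = k) (list_decode R) of None \<Rightarrow> 0 | Some y \<Rightarrow> Suc (p2 y))"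
  unfolding lookup_def lookup_fold by simp

lemma find_SomeD': "find Q xs = Some y \<Longrightarrow> y \<in> set xs \<and> Q y"
  by (induct xs) (auto split: if_splits)

definition domc :: "nat \<Rightarrow> nat set" where "domc R = p1 ` set (list_decode R)"

lemma lookup_zero_iff: "lookup k R = 0 \<longleftrightarrow> k \<notin> domc R"
  unfolding lookup_find domc_def by (auto split: option.split simp: find_None_iff dest!: find_SomeD')

lemma lookup_SucD: "lookup k R = Suc w \<Longrightarrow> \<exists>y\<in>set (list_decode R). p1 y = k \<and> p2 y = w"
  unfolding lookup_find by (auto split: option.splits dest!: find_SomeD')

lemma lookup_append_notin:
  "(\<forall>y\<in>set X. p1 y \<noteq> k) \<Longrightarrow> find (\<lambda>y. p1 y = k) (X @ L) = find (\<lambda>y. p1 y = k) L"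
  by (induct X) auto

lemma memn_fold: "foldl (\<lambda>acc y. if y = k then 1 else acc) a xs = (if k \<in> set xs then 1 else a)"
  by (induct xs arbitrary: a) auto

lemma memn_iff: "memn k L \<noteq> 0 \<longleftrightarrow> k \<in> set (list_decode L)"
  unfolding memn_def memn_fold by simp

lemma memn_zero: "memn k L = 0 \<longleftrightarrow> k \<notin> set (list_decode L)"
  using memn_iff by blast
lemma memn_pos: "0 < memn k L \<longleftrightarrow> k \<in> set (list_decode L)"
  using memn_iff by blast

lemma list_decode_elem_less: "x \<in> set (list_decode c) \<Longrightarrow> x < c"
proof (induct c rule: list_decode.induct)
  case 1 then show ?case by simp
next
  case (2 n)
  obtain a b where ab: "prod_decode n = (a, b)" by (cases "prod_decode n")
  have "a \<le> n" "b \<le> n" using le_prod_encode_1[of a b] le_prod_encode_2[of b a] prod_decode_inverse[of n] ab by simp_all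
  then show ?case using 2 ab by (auto simp del: list_decode.simps simp: list_decode_Suc)
qed

lemma sortset_aux:
  assumes "n \<le> Suc L"
  shows "list_decode (rec_nat 0 (\<lambda>n S. if memn (L - n) L = 0 then S else cons_c (L - n) S) n)
       = filter (\<lambda>x. x \<in> set (list_decode L)) [Suc L - n..<Suc L]"
  using assms
proof (induct n)
  case 0 then show ?case by simp
next
  case (Suc n)
  have eq: "[Suc L - Suc n..<Suc L] = (L - n) # [Suc L - n..<Suc L]"
  proof -
    have a: "Suc L - Suc n = L - n" by simp
    have b: "Suc L - n = Suc (L - n)" using Suc.prems by simp
    show ?thesis unfolding a b by (rule upt_conv_Cons) simp
  qed
  have IH: "list_decode (rec_nat 0 (\<lambda>n S. if memn (L - n) L = 0 then S else cons_c (L - n) S) n)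
       = filter (\<lambda>x. x \<in> set (list_decode L)) [Suc L - n..<Suc L]" using Suc by (simp del: upt_Suc)
  have b: "Suc L - n = Suc (L - n)" using Suc.prems by simp
  have eq2: "[L - n..<Suc L] = (L - n) # [Suc (L - n)..<Suc L]" by (rule upt_conv_Cons) simp
  show ?case using IH by (simp add: eq2 b memn_zero memn_pos del: upt_Suc)
qed

lemma sortset_correct: "list_decode (sortset L) = sorted_list_of_set (set (list_decode L))"
proof -
  have "list_decode (sortset L) = filter (\<lambda>x. x \<in> set (list_decode L)) [0..<Suc L]"
    unfolding sortset_def using sortset_aux[of "Suc L" L] by simp
  also have "\<dots> = sorted_list_of_set (set (list_decode L))"
  proof (rule sorted_distinct_set_unique)
    show "sorted (filter (\<lambda>x. x \<in> set (list_decode L)) [0..<Suc L])" by (rule sorted_wrt_filter) (simp del: upt_Suc)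
    show "distinct (filter (\<lambda>x. x \<in> set (list_decode L)) [0..<Suc L])" by simp
    show "sorted (sorted_list_of_set (set (list_decode L)))" by simp
    show "distinct (sorted_list_of_set (set (list_decode L)))" by simp
    show "set (filter (\<lambda>x. x \<in> set (list_decode L)) [0..<Suc L]) = set (sorted_list_of_set (set (list_decode L)))"
      using list_decode_elem_less[of _ L] by auto
  qed
  finally show ?thesis .
qed

lemma hdc_enc[simp]: "hdc (list_encode (x # xs)) = x"
  by (simp add: hdc_def)
lemma tlc_enc[simp]: "tlc (list_encode (x # xs)) = list_encode xs"
  by (simp add: tlc_def)

lemma fold_cons_c:
  "list_decode (foldl (\<lambda>acc b. cons_c (g b) acc) acc bs) = rev (map g bs) @ list_decode acc"
  by (induct bs arbitrary: acc) auto

lemma fold_fold_cons_c: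
  "set (list_decode (foldl (\<lambda>acc a. foldl (\<lambda>acc' b. cons_c (g a b) acc') acc bs) acc as))
   = {g a b | a b. a \<in> set as \<and> b \<in> set bs} \<union> set (list_decode acc)"
  by (induct as arbitrary: acc) (auto simp: fold_cons_c)

lemma initm_set: "set (list_decode (initm V v)) = {P (P a b) v | a b. a \<in> set (list_decode V) \<and> b \<in> set (list_decode V)}"
  unfolding initm_def by (subst fold_fold_cons_c) simp

lemma (in alg) Lq_set: "set (list_decode (Lq Qc Rf Rb)) = {entry Rf Rb (P a b) | a b. a \<in> set (list_decode Qc) \<and> b \<in> set (list_decode Qc)}"
  unfolding Lq_def by (subst fold_fold_cons_c) simp

lemma enc_set_decode: "finite S \<Longrightarrow> list_decode (enc_set S) = sorted_list_of_set S"
  by (simp add: enc_set_def)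



context alg
begin

lemma round_prefix:
  "\<exists>X. list_decode (foldl (\<lambda>acc t. stepR d t acc) R ts) = X @ list_decode R
     \<and> (\<forall>y\<in>set X. p1 y \<notin> domc R)
     \<and> (X = [] \<longrightarrow> (\<forall>t\<in>set ts. \<not> (lookup (src d t) R \<noteq> 0 \<and> lookup (dst d t) R = 0)))"
proof (induct ts arbitrary: R)
  case Nil show ?case by simp
next
  case (Cons t ts)
  show ?case
  proof (cases "lookup (src d t) R \<noteq> 0 \<and> lookup (dst d t) R = 0")
    case True
    let ?y = "P (dst d t) (mulF (lookup (src d t) R - 1) (p1 (p2 t)))"
    let ?R' = "cons_c ?y R"
    have st: "stepR d t R = ?R'" using True unfolding stepR_def by simp
    obtain X where X: "list_decode (foldl (\<lambda>acc t. stepR d t acc) ?R' ts) = X @ list_decode ?R'"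
       "\<forall>y\<in>set X. p1 y \<notin> domc ?R'" using Cons.hyps[of ?R'] by blast
    have dom': "domc ?R' = insert (dst d t) (domc R)" by (simp add: domc_def)
    have new: "dst d t \<notin> domc R" using True lookup_zero_iff by blast
    show ?thesis
      apply (rule exI[of _ "X @ [?y]"])
      using X st dom' new by auto
  next
    case False
    then have st: "stepR d t R = R" unfolding stepR_def by auto
    obtain X where X: "list_decode (foldl (\<lambda>acc t. stepR d t acc) R ts) = X @ list_decode R"
       "\<forall>y\<in>set X. p1 y \<notin> domc R"
       "X = [] \<longrightarrow> (\<forall>t\<in>set ts. \<not> (lookup (src d t) R \<noteq> 0 \<and> lookup (dst d t) R = 0))"
      using Cons.hyps[of R] by blast
    show ?thesis apply (rule exI[of _ X]) using X st False by auto
  qed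
qed

lemma round_lookup_keep:
  assumes "lookup k R \<noteq> 0"
  shows "lookup k (round d D2 R) = lookup k R"
proof -
  obtain X where X: "list_decode (round d D2 R) = X @ list_decode R" "\<forall>y\<in>set X. p1 y \<notin> domc R"
    using round_prefix[of d R "list_decode D2"] unfolding round_def by blast
  have "k \<in> domc R" using assms by (simp add: lookup_zero_iff)
  then have "\<forall>y\<in>set X. p1 y \<noteq> k" using X(2) by auto
  then show ?thesis unfolding lookup_find X(1) by (simp add: lookup_append_notin)
qed

lemma round_fix:
  assumes "round d D2 R = R" "t \<in> set (list_decode D2)" "lookup (src d t) R \<noteq> 0"
  shows "lookup (dst d t) R \<noteq> 0"
proof -
  obtain X where X: "list_decode (round d D2 R) = X @ list_decode R"
       "X = [] \<longrightarrow> (\<forall>t\<in>set (list_decode D2). \<not> (lookup (src d t) R \<noteq> 0 \<and> lookup (dst d t) R = 0))"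
    using round_prefix[of d R "list_decode D2"] unfolding round_def by blast
  have "X = []" using X(1) assms(1) by simp
  then show ?thesis using X(2) assms(2,3) by auto
qed

lemma round_grow:
  assumes "round d D2 R \<noteq> R"
  shows "domc R \<subset> domc (round d D2 R)"
proof -
  obtain X where X: "list_decode (round d D2 R) = X @ list_decode R" "\<forall>y\<in>set X. p1 y \<notin> domc R"
    using round_prefix[of d R "list_decode D2"] unfolding round_def by blast
  have "X \<noteq> []"
  proof
    assume "X = []"
    then have "list_decode (round d D2 R) = list_decode R" using X by simp
    then show False using assms list_decode_eq by blast
  qed
  then obtain y where y: "y \<in> set X" by (cases X) auto
  have sub: "domc R \<subseteq> domc (round d D2 R)" unfolding domc_def X(1) by auto
  have "p1 y \<in> domc (round d D2 R)" unfolding domc_def X(1) using y by auto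
  moreover have "p1 y \<notin> domc R" using X(2) y by auto
  ultimately show ?thesis using sub by auto
qed

lemma fold_dom_sub:
  "domc (foldl (\<lambda>acc t. stepR d t acc) R ts) \<subseteq> domc R \<union> dst d ` set ts"
proof (induct ts arbitrary: R)
  case Nil then show ?case by simp
next
  case (Cons t ts)
  have "domc (stepR d t R) \<subseteq> insert (dst d t) (domc R)"
    unfolding stepR_def by (auto simp: domc_def)
  then show ?case using Cons[of "stepR d t R"] by auto
qed

lemma round_dom_sub: "domc (round d D2 R) \<subseteq> domc R \<union> dst d ` set (list_decode D2)"
  unfolding round_def by (rule fold_dom_sub)

lemma fold_inv:
  assumes R: "\<forall>y\<in>set (list_decode R). Inv y"
    and pres: "\<And>t w. t \<in> set ts \<Longrightarrow> Inv (P (src d t) w) \<Longrightarrow> Inv (P (dst d t) (mulF w (p1 (p2 t))))"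
  shows "\<forall>y\<in>set (list_decode (foldl (\<lambda>acc t. stepR d t acc) R ts)). Inv y"
  using assms
proof (induct ts arbitrary: R)
  case Nil then show ?case by simp
next
  case (Cons t ts)
  have "\<forall>y\<in>set (list_decode (stepR d t R)). Inv y"
  proof (cases "lookup (src d t) R \<noteq> 0 \<and> lookup (dst d t) R = 0")
    case True
    then obtain w where w: "lookup (src d t) R = Suc w" by (cases "lookup (src d t) R") auto
    then obtain y where y: "y \<in> set (list_decode R)" "p1 y = src d t" "p2 y = w"
      using lookup_SucD by blast
    have "Inv (P (src d t) w)" using Cons.prems(1) y prod_decode_inverse[of y]
      by (metis prod.collapse)
    then have "Inv (P (dst d t) (mulF w (p1 (p2 t))))" using Cons.prems(2) by simp
    then show ?thesis using True w Cons.prems(1) unfolding stepR_def by simp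
  next
    case False
    then show ?thesis using Cons.prems(1) unfolding stepR_def by auto
  qed
  then show ?case using Cons.hyps[of "stepR d t R"] Cons.prems(2) by simp
qed

lemma round_inv:
  assumes "\<forall>y\<in>set (list_decode R). Inv y"
    and "\<And>t w. t \<in> set (list_decode D2) \<Longrightarrow> Inv (P (src d t) w) \<Longrightarrow> Inv (P (dst d t) (mulF w (p1 (p2 t))))"
  shows "\<forall>y\<in>set (list_decode (round d D2 R)). Inv y"
  unfolding round_def using fold_inv[of R Inv "list_decode D2" d] assms by blast

lemma closure_funpow: "closure d D2 R0 N = (round d D2 ^^ N) R0"
  unfolding closure_def by (rule rec_nat_funpow)

lemma closure_inv:
  assumes "\<forall>y\<in>set (list_decode R0). Inv y"
    and "\<And>t w. t \<in> set (list_decode D2) \<Longrightarrow> Inv (P (src d t) w) \<Longrightarrow> Inv (P (dst d t) (mulF w (p1 (p2 t))))"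
  shows "\<forall>y\<in>set (list_decode (closure d D2 R0 N)). Inv y"
  unfolding closure_funpow
proof (induct N)
  case 0 then show ?case using assms(1) by simp
next
  case (Suc N)
  have "\<forall>y\<in>set (list_decode (round d D2 ((round d D2 ^^ N) R0))). Inv y"
    by (rule round_inv[where d=d and ?D2.0=D2 and Inv=Inv]) (use Suc assms(2) in auto)
  then show ?case by simp
qed

lemma closure_keep:
  assumes "lookup k R0 \<noteq> 0"
  shows "lookup k (closure d D2 R0 N) = lookup k R0"
  unfolding closure_funpow
proof (induct N)
  case 0 then show ?case by simp
next
  case (Suc N) then show ?case using round_lookup_keep assms by simp
qed

lemma finite_domc: "finite (domc R)"
  unfolding domc_def by simp

lemma closure_fix:
  assumes K: "finite K" "domc R0 \<subseteq> K" "dst d ` set (list_decode D2) \<subseteq> K" and N: "card K < N"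
  shows "round d D2 (closure d D2 R0 N) = closure d D2 R0 N"
proof (rule ccontr)
  define Rk where "Rk k = (round d D2 ^^ k) R0" for k
  assume nf: "round d D2 (closure d D2 R0 N) \<noteq> closure d D2 R0 N"
  then have nfN: "round d D2 (Rk N) \<noteq> Rk N" unfolding Rk_def closure_funpow .
  have domK: "domc (Rk k) \<subseteq> K" for k
  proof (induct k)
    case 0 then show ?case using K by (simp add: Rk_def)
  next
    case (Suc k)
    have "Rk (Suc k) = round d D2 (Rk k)" by (simp add: Rk_def)
    then show ?case using round_dom_sub[of d D2 "Rk k"] Suc K(3) by auto
  qed
  have stay: "round d D2 (Rk k) = Rk k \<Longrightarrow> Rk (k + j) = Rk k" for k j
    by (induct j) (auto simp: Rk_def)
  have nfk: "round d D2 (Rk k) \<noteq> Rk k" if "k \<le> N" for k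
  proof
    assume "round d D2 (Rk k) = Rk k"
    then have "Rk N = Rk k" using stay[of k "N - k"] that by simp
    then show False using nfN \<open>round d D2 (Rk k) = Rk k\<close> by simp
  qed
  have "k \<le> card (domc (Rk k))" if "k \<le> N" for k
    using that
  proof (induct k)
    case 0 then show ?case by simp
  next
    case (Suc k)
    have "domc (Rk k) \<subset> domc (round d D2 (Rk k))" using round_grow nfk Suc.prems by simp
    then have "card (domc (Rk k)) < card (domc (Rk (Suc k)))"
      by (simp add: Rk_def psubset_card_mono finite_domc)
    then show ?case using Suc by simp
  qed
  then have "N \<le> card (domc (Rk N))" by simp
  also have "\<dots> \<le> card K" using domK K(1) card_mono by blast
  finally show False using N by simp
qed

end



definition edges :: "('q \<times> 'l \<times> 'q) set \<Rightarrow> ('q \<times> 'q) set" where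
  "edges \<Delta> = {(a, b). \<exists>l. (a, l, b) \<in> \<Delta>}"

lemma gen_trans_rtrancl: "(p, x, q) \<in> gen_trans \<Delta> mult one \<Longrightarrow> (p, q) \<in> (edges \<Delta>)\<^sup>*"
proof (induct rule: gen_trans.induct)
  case (refl q) then show ?case by simp
next
  case (step p x q y r)
  then show ?case by (auto simp: edges_def intro: rtrancl_into_rtrancl)
qed

lemma rtrancl_gen_trans: "(p, q) \<in> (edges \<Delta>)\<^sup>* \<Longrightarrow> \<exists>x. (p, x, q) \<in> gen_trans \<Delta> mult one"
proof (induct rule: rtrancl_induct)
  case base then show ?case by (auto intro: gen_trans.refl)
next
  case (step y z)
  then show ?case by (auto simp: edges_def intro: gen_trans.step)
qed

lemma A2_labels:
  assumes mon: "monoid_on M f e" and D: "\<Delta>2 \<subseteq> (Q \<times> Q) \<times> (M \<times> M) \<times> (Q \<times> Q)"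
  shows "(p, x, q) \<in> A2_star f e \<Delta>2 \<Longrightarrow> x \<in> M \<times> M"
  unfolding A2_star_def
proof (induct rule: gen_trans.induct)
  case (refl q) then show ?case using mon by (simp add: monoid_on_def)
next
  case (step p x q y r)
  then show ?case using D mon by (auto simp: monoid_on_def)
qed

lemma triangle_sq: "c * c \<le> triangle (c + c)"
  by (induct c) auto

lemma enc_trans2_parts:
  "p1 (enc_trans2 (p, mn, q)) = prod_encode p"
  "p1 (p2 (enc_trans2 (p, mn, q))) = prod_encode mn"
  "p2 (p2 (enc_trans2 (p, mn, q))) = prod_encode q"
  by (simp_all add: enc_trans2_def)

locale alg_corr = alg +
  fixes M :: "nat set" and f :: "nat \<Rightarrow> nat \<Rightarrow> nat" and \<eta> :: "nat \<times> nat \<Rightarrow> nat \<times> nat"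
  assumes mon: "monoid_on M f e"
    and ft_ok: "\<And>a b. a \<in> M \<Longrightarrow> b \<in> M \<Longrightarrow> ft (P a b) = f a b"
    and eqz_ok: "\<And>a b. a \<in> M \<Longrightarrow> b \<in> M \<Longrightarrow> eqz (P a b) = (if equalizable M f a b then 1 else 0)"
    and et_ok: "\<And>a b. a \<in> M \<Longrightarrow> b \<in> M \<Longrightarrow> et (P a b) = prod_encode (\<eta> (a, b))"
begin

lemma e_in: "e \<in> M" using mon by (simp add: monoid_on_def)

theorem main_ok:
  assumes T: "transducer M Sig Q I F \<Delta>" and S: "squared_output_automaton M f e Sig Q I F \<Delta> \<Delta>2"
  shows "\<exists>\<rho> \<nu>. valuation M f e \<eta> Q I F \<Delta>2 \<rho> \<nu> \<and> main (input_code Sig Q I F \<Delta> \<Delta>2) = output_code Q \<rho> \<nu>"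
proof -
  define c where "c = input_code Sig Q I F \<Delta> \<Delta>2"
  define D2c where "D2c = enc_set (enc_trans2 ` \<Delta>2)"
  have finQ: "finite Q" and IQ: "I \<subseteq> Q" and FQ: "F \<subseteq> Q" using T by (auto simp: transducer_def)
  have finI: "finite I" using finQ IQ finite_subset by blast
  have finF: "finite F" using finQ FQ finite_subset by blast
  have finD2: "finite \<Delta>2" and D2sub: "\<Delta>2 \<subseteq> (Q \<times> Q) \<times> (M \<times> M) \<times> (Q \<times> Q)"
    using S by (auto simp: squared_output_automaton_def)
  have c_list: "list_decode c = [enc_set Sig, enc_set Q, enc_set I, enc_set F, enc_set (enc_trans ` \<Delta>), D2c]"
    unfolding c_def input_code_def D2c_def by simp
  have cQ: "hdc (tlc c) = enc_set Q" and cI: "hdc (tlc (tlc c)) = enc_set I"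
    and cF: "hdc (tlc (tlc (tlc c))) = enc_set F" and cD: "hdc (tlc (tlc (tlc (tlc (tlc c))))) = D2c"
    unfolding c_def input_code_def D2c_def by (simp_all add: hdc_def tlc_def)
  have setQ: "set (list_decode (enc_set Q)) = Q" using finQ by (simp add: enc_set_decode)
  have setI: "set (list_decode (enc_set I)) = I" using finI by (simp add: enc_set_decode)
  have setF: "set (list_decode (enc_set F)) = F" using finF by (simp add: enc_set_decode)
  have setD: "set (list_decode D2c) = enc_trans2 ` \<Delta>2" using finD2 by (simp add: enc_set_decode D2c_def)
  define Rf where "Rf = Rfc c"
  define Rb where "Rb = Rbc c"
  have Rf_def': "Rf = closure 0 D2c (initm (enc_set I) (P e e)) (Nb c)"
    unfolding Rf_def Rfc_def cI cD ..
  have Rb_def': "Rb = closure 1 D2c (initm (enc_set F) 0) (Nb c)"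
    unfolding Rb_def Rbc_def cF cD ..
  define K where "K = prod_encode ` (Q \<times> Q)"
  have finK: "finite K" unfolding K_def using finQ by simp
  have cardQ: "card Q \<le> c"
  proof -
    have "card Q = length (list_decode (enc_set Q))" using finQ by (simp add: enc_set_decode)
    also have "\<dots> \<le> enc_set Q" by (rule length_list_decode_le)
    also have "\<dots> < c" using list_decode_elem_less[of "enc_set Q" c] c_list by simp
    finally show ?thesis by simp
  qed
  have cardK: "card K < Nb c"
  proof -
    have "card K = card (Q \<times> Q)" unfolding K_def by (rule card_image) (simp add: inj_on_def)
    also have "\<dots> = card Q * card Q" by (simp add: card_cartesian_product)
    also have "\<dots> \<le> c * c" using cardQ by (simp add: mult_le_mono)
    also have "\<dots> \<le> triangle (c + c)" by (rule triangle_sq)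
    also have "\<dots> < Nb c" by (simp add: Nb_def prod_encode_def)
    finally show ?thesis .
  qed
  have dstK: "dst d ` set (list_decode D2c) \<subseteq> K" for d
    unfolding setD K_def dst_def using D2sub by (auto simp: enc_trans2_parts)
  have initK: "domc (initm (enc_set V) v) \<subseteq> K" if "V \<subseteq> Q" "finite V" for V v
    unfolding domc_def initm_set K_def using that by (auto simp: enc_set_decode)
  have fixf: "round 0 D2c Rf = Rf"
    unfolding Rf_def' by (rule closure_fix[OF finK initK[OF IQ finI] dstK cardK])
  have fixb: "round 1 D2c Rb = Rb"
    unfolding Rb_def' by (rule closure_fix[OF finK initK[OF FQ finF] dstK cardK])
  have lab: "x \<in> M \<times> M" if "(p, x, q) \<in> A2_star f e \<Delta>2" for p x q
    using A2_labels[OF mon D2sub that] .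
  have A2e: "A2_star f e \<Delta>2 = gen_trans \<Delta>2 (\<lambda>(m1, m2) (n1, n2). (f m1 n1, f m2 n2)) (e, e)"
    by (simp add: A2_star_def)
  define Invf where "Invf y \<longleftrightarrow> (\<exists>i\<in>I \<times> I. (i, prod_decode (p2 y), prod_decode (p1 y)) \<in> A2_star f e \<Delta>2)" for y
  have invf: "\<forall>y\<in>set (list_decode Rf). Invf y"
    unfolding Rf_def'
  proof (rule closure_inv)
    show "\<forall>y\<in>set (list_decode (initm (enc_set I) (P e e))). Invf y"
      unfolding initm_set setI Invf_def using gen_trans.refl by (fastforce simp: A2_star_def)
  next
    fix t w assume t: "t \<in> set (list_decode D2c)" and iw: "Invf (P (src 0 t) w)"
    obtain p m n q where pq: "(p, (m, n), q) \<in> \<Delta>2" and tt: "t = enc_trans2 (p, (m, n), q)"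
      using t unfolding setD by auto
    obtain i where i: "i \<in> I \<times> I" and ip: "(i, prod_decode w, p) \<in> A2_star f e \<Delta>2"
      using iw tt unfolding Invf_def by (auto simp: src_def enc_trans2_parts)
    obtain w1 w2 where w: "prod_decode w = (w1, w2)" by (cases "prod_decode w")
    have wM: "w1 \<in> M" "w2 \<in> M" using lab[OF ip] w by auto
    have mnM: "m \<in> M" "n \<in> M" using pq D2sub by auto
    have mul: "mulF w (p1 (p2 t)) = P (f w1 m) (f w2 n)"
      unfolding mulF_def tt enc_trans2_parts using w wM mnM ft_ok by simp
    have "(i, (f w1 m, f w2 n), q) \<in> A2_star f e \<Delta>2"
      using gen_trans.step[OF ip[unfolded A2e w] pq] unfolding A2e by simp
    then show "Invf (P (dst 0 t) (mulF w (p1 (p2 t))))"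
      unfolding Invf_def mul using i by (auto simp: dst_def tt enc_trans2_parts)
  qed
  define Invb where "Invb y \<longleftrightarrow> (\<exists>g\<in>F \<times> F. (prod_decode (p1 y), g) \<in> (edges \<Delta>2)\<^sup>*)" for y
  have invb: "\<forall>y\<in>set (list_decode Rb). Invb y"
    unfolding Rb_def'
  proof (rule closure_inv)
    show "\<forall>y\<in>set (list_decode (initm (enc_set F) 0)). Invb y"
      unfolding initm_set setF Invb_def using rtrancl_refl by fastforce
  next
    fix t w assume t: "t \<in> set (list_decode D2c)" and iw: "Invb (P (src 1 t) w)"
    obtain p l q where pq: "(p, l, q) \<in> \<Delta>2" and tt: "t = enc_trans2 (p, l, q)"
      using t unfolding setD by auto
    obtain g where g: "g \<in> F \<times> F" and qg: "(q, g) \<in> (edges \<Delta>2)\<^sup>*"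
      using iw tt unfolding Invb_def by (auto simp: src_def enc_trans2_parts)
    have "(p, q) \<in> edges \<Delta>2" using pq unfolding edges_def by blast
    from converse_rtrancl_into_rtrancl[OF this qg] have "(p, g) \<in> (edges \<Delta>2)\<^sup>*" .
    then show "Invb (P (dst 1 t) (mulF w (p1 (p2 t))))"
      unfolding Invb_def using g by (auto simp: dst_def tt enc_trans2_parts)
  qed
  have F1: "lookup (prod_encode i) Rf = Suc (P e e)" if "i \<in> I \<times> I" for i
  proof -
    have "prod_encode i \<in> domc (initm (enc_set I) (P e e))"
      unfolding domc_def initm_set setI using that by force
    then obtain w where w: "lookup (prod_encode i) (initm (enc_set I) (P e e)) = Suc w"
      using lookup_zero_iff by (metis not0_implies_Suc)
    then obtain y where "y \<in> set (list_decode (initm (enc_set I) (P e e)))" "p2 y = w"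
      using lookup_SucD by blast
    then have "w = P e e" unfolding initm_set by auto
    then show ?thesis unfolding Rf_def' using closure_keep w by simp
  qed
  have F2: "lookup (prod_encode q) Rf \<noteq> 0" if "(i, q) \<in> (edges \<Delta>2)\<^sup>*" "i \<in> I \<times> I" for i q
    using that(1)
  proof (induct rule: rtrancl_induct)
    case base then show ?case using F1[OF that(2)] by simp
  next
    case (step q q')
    then obtain l where l: "(q, l, q') \<in> \<Delta>2" by (auto simp: edges_def)
    have "enc_trans2 (q, l, q') \<in> set (list_decode D2c)" using l setD by auto
    from round_fix[OF fixf this] step(3) show ?case
      by (cases l) (simp add: src_def dst_def enc_trans2_parts)
  qed
  have F3: "\<exists>i\<in>I \<times> I. (i, prod_decode v, q) \<in> A2_star f e \<Delta>2" if L: "lookup (prod_encode q) Rf = Suc v" for q v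
  proof -
    obtain y where "y \<in> set (list_decode Rf)" "p1 y = prod_encode q" "p2 y = v"
      using lookup_SucD[OF L] by blast
    then show ?thesis using invf unfolding Invf_def by force
  qed
  have B1: "lookup (prod_encode g) Rb \<noteq> 0" if "g \<in> F \<times> F" for g
  proof -
    have "prod_encode g \<in> domc (initm (enc_set F) 0)"
      unfolding domc_def initm_set setF using that by force
    then have "lookup (prod_encode g) (initm (enc_set F) 0) \<noteq> 0" using lookup_zero_iff by blast
    then show ?thesis unfolding Rb_def' using closure_keep by simp
  qed
  have B2: "lookup (prod_encode q) Rb \<noteq> 0" if "(q, g) \<in> (edges \<Delta>2)\<^sup>*" "g \<in> F \<times> F" for q g
    using that(1)
  proof (induct rule: converse_rtrancl_induct)
    case base then show ?case using B1[OF that(2)] by simp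
  next
    case (step q q')
    then obtain l where l: "(q, l, q') \<in> \<Delta>2" by (auto simp: edges_def)
    have "enc_trans2 (q, l, q') \<in> set (list_decode D2c)" using l setD by auto
    from round_fix[OF fixb this] step(3) show ?case
      by (cases l) (simp add: src_def dst_def enc_trans2_parts)
  qed
  have B3: "\<exists>g\<in>F \<times> F. (q, g) \<in> (edges \<Delta>2)\<^sup>*" if L: "lookup (prod_encode q) Rb \<noteq> 0" for q
  proof -
    obtain v where "lookup (prod_encode q) Rb = Suc v" using L not0_implies_Suc by blast
    then obtain y where "y \<in> set (list_decode Rb)" "p1 y = prod_encode q"
      using lookup_SucD by blast
    then show ?thesis using invb unfolding Invb_def by force
  qed
  define rc where "rc q = rhoc Rf Rb (prod_encode q)" for q
  define \<rho> where "\<rho> q = (if q \<in> Q \<times> Q then (case rc q of 0 \<Rightarrow> None | Suc v \<Rightarrow> Some (prod_decode v)) else None)" for q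
  define \<nu> where "\<nu> q = (case \<rho> q of None \<Rightarrow> None
               | Some (a, b) \<Rightarrow> if a = b then Some (e, e)
                               else if equalizable M f a b then Some (\<eta> (a, b)) else None)" for q
  have rc_ne: "rc q \<noteq> 0 \<longleftrightarrow> lookup (prod_encode q) Rb \<noteq> 0 \<and> lookup (prod_encode q) Rf \<noteq> 0" for q
    by (simp add: rc_def rhoc_def)
  have rc_some: "lookup (prod_encode q) Rf = Suc v \<and> lookup (prod_encode q) Rb \<noteq> 0" if "rc q = Suc v" for q v
    using that by (simp add: rc_def rhoc_def split: if_splits)
  have relev: "(\<exists>mp. relevant_pair f e I F \<Delta>2 q mp) \<longleftrightarrow> rc q \<noteq> 0" for q
  proof
    assume "\<exists>mp. relevant_pair f e I F \<Delta>2 q mp"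
    then obtain i g x y where i: "i \<in> I \<times> I" and g: "g \<in> F \<times> F" and ix: "(i, x, q) \<in> A2_star f e \<Delta>2"
      and qy: "(q, y, g) \<in> A2_star f e \<Delta>2"
      unfolding relevant_pair_def by blast
    have "(i, q) \<in> (edges \<Delta>2)\<^sup>*" using gen_trans_rtrancl ix unfolding A2_star_def by fast
    moreover have "(q, g) \<in> (edges \<Delta>2)\<^sup>*" using gen_trans_rtrancl qy unfolding A2_star_def by fast
    ultimately show "rc q \<noteq> 0" using F2 B2 i g rc_ne by blast
  next
    assume "rc q \<noteq> 0"
    then obtain v where v: "rc q = Suc v" using not0_implies_Suc by blast
    then have lf: "lookup (prod_encode q) Rf = Suc v" and lb: "lookup (prod_encode q) Rb \<noteq> 0"
      using rc_some by auto
    obtain i where i: "i \<in> I \<times> I" and iq: "(i, prod_decode v, q) \<in> A2_star f e \<Delta>2" using F3[OF lf] by blast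
    obtain g where g: "g \<in> F \<times> F" and qg: "(q, g) \<in> (edges \<Delta>2)\<^sup>*" using B3[OF lb] by blast
    obtain y where "(q, y, g) \<in> A2_star f e \<Delta>2" using rtrancl_gen_trans[OF qg] unfolding A2_star_def by blast
    then have "relevant_pair f e I F \<Delta>2 q (prod_decode v)" unfolding relevant_pair_def using i g iq by blast
    then show "\<exists>mp. relevant_pair f e I F \<Delta>2 q mp" by blast
  qed
  have rho_some: "(if q \<in> I \<times> I then r = (e, e) else relevant_pair f e I F \<Delta>2 q r) \<and> r \<in> M \<times> M"
    if rq: "\<rho> q = Some r" for q r
  proof -
    have qQ: "q \<in> Q \<times> Q" using rq unfolding \<rho>_def by (auto split: if_splits)
    obtain v where v: "rc q = Suc v" and r: "r = prod_decode v" using rq qQ unfolding \<rho>_def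
      by (auto split: nat.splits)
    have lf: "lookup (prod_encode q) Rf = Suc v" and lb: "lookup (prod_encode q) Rb \<noteq> 0"
      using rc_some[OF v] by auto
    obtain i where i: "i \<in> I \<times> I" and iq: "(i, r, q) \<in> A2_star f e \<Delta>2" using F3[OF lf] r by blast
    have rM: "r \<in> M \<times> M" using lab[OF iq] .
    show ?thesis
    proof (cases "q \<in> I \<times> I")
      case True
      then have "v = P e e" using F1 lf by simp
      then show ?thesis using True r e_in by simp
    next
      case False
      obtain g where g: "g \<in> F \<times> F" and qg: "(q, g) \<in> (edges \<Delta>2)\<^sup>*" using B3[OF lb] by blast
      obtain y where "(q, y, g) \<in> A2_star f e \<Delta>2" using rtrancl_gen_trans[OF qg] unfolding A2_star_def by blast
      then have "relevant_pair f e I F \<Delta>2 q r" unfolding relevant_pair_def using i g iq by blast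
      then show ?thesis using False rM by simp
    qed
  qed
  have val: "valuation M f e \<eta> Q I F \<Delta>2 \<rho> \<nu>"
    unfolding valuation_def
  proof (intro ballI conjI allI impI)
    fix q assume qQ: "q \<in> Q \<times> Q"
    show "(\<rho> q \<noteq> None) = (\<exists>mp. relevant_pair f e I F \<Delta>2 q mp)"
      using relev[of q] qQ by (simp add: \<rho>_def split: nat.split)
    show "\<nu> q = (case \<rho> q of None \<Rightarrow> None
               | Some (a, b) \<Rightarrow> if a = b then Some (e, e)
                               else if equalizable M f a b then Some (\<eta> (a, b)) else None)"
      by (simp add: \<nu>_def)
  next
    fix q r assume "q \<in> Q \<times> Q" "\<rho> q = Some r"
    then show "if q \<in> I \<times> I then r = (e, e) else relevant_pair f e I F \<Delta>2 q r"
      using rho_some by blast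
  qed
  define W where "W q = prod_encode (prod_encode q,
       prod_encode (enc_opt (map_option prod_encode (\<rho> q)), enc_opt (map_option prod_encode (\<nu> q))))" for q
  have entry_W: "entry Rf Rb (P a b) = W (a, b)" if ab: "a \<in> Q" "b \<in> Q" for a b
  proof -
    have R1: "enc_opt (map_option prod_encode (\<rho> (a, b))) = rc (a, b)"
      using ab by (cases "rc (a, b)") (auto simp: \<rho>_def enc_opt_def)
    have R2: "enc_opt (map_option prod_encode (\<nu> (a, b))) = nuc (rc (a, b))"
    proof (cases "rc (a, b)")
      case 0 then show ?thesis using ab by (simp add: \<nu>_def \<rho>_def nuc_def enc_opt_def)
    next
      case (Suc v)
      obtain a' b' where v: "prod_decode v = (a', b')" by (cases "prod_decode v")
      have rq: "\<rho> (a, b) = Some (a', b')" using Suc ab v by (simp add: \<rho>_def)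
      then have M: "a' \<in> M" "b' \<in> M" using rho_some by blast+
      have vv: "v = P a' b'" using v prod_decode_inverse[of v] by simp
      show ?thesis using rq Suc M unfolding \<nu>_def nuc_def vv
        by (simp add: enc_opt_def eqz_ok et_ok)
    qed
    show ?thesis unfolding entry_def W_def using R1 R2 by (simp add: rc_def)
  qed
  have Lset: "set (list_decode (Lq (enc_set Q) Rf Rb)) = W ` (Q \<times> Q)"
    unfolding Lq_set setQ using entry_W by force
  have "main c = list_encode (list_decode (sortset (Lq (enc_set Q) Rf Rb)))"
    unfolding main_def cQ Rf_def Rb_def by simp
  also have "\<dots> = enc_set (W ` (Q \<times> Q))"
    by (simp only: sortset_correct Lset) (simp add: enc_set_def)
  also have "\<dots> = output_code Q \<rho> \<nu>"
    unfolding output_code_def W_def ..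
  finally show ?thesis using val unfolding c_def by blast
qed

end



lemma c_ext:
  assumes r: "computes_on r D g" and s: "comp1 s" and sD: "\<And>x. s x \<in> D"
  shows "comp1 (\<lambda>x. g (s x))"
proof -
  obtain rs where rs: "\<And>x. eval_recf rs [x] (s x)" using s unfolding comp1_def by blast
  have "eval_recf r [s x] (g (s x))" for x using r sD unfolding computes_on_def by blast
  then show ?thesis by (intro comp1I[where r="RComp r [rs]"] ev_comp1[OF rs])
qed

theorem proposition3:
  fixes M :: "nat set" and f :: "nat \<Rightarrow> nat \<Rightarrow> nat" and e :: nat
    and \<eta> :: "nat \<times> nat \<Rightarrow> nat \<times> nat"
  assumes "effective_mge_monoid M f e \<eta>"
  shows "\<exists>r. \<forall>Sig Q I F \<Delta> \<Delta>2.
           transducer M Sig Q I F \<Delta> \<and> squared_output_automaton M f e Sig Q I F \<Delta> \<Delta>2 \<longrightarrow>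
           (\<exists>\<rho> \<nu>. valuation M f e \<eta> Q I F \<Delta>2 \<rho> \<nu>
                  \<and> eval_recf r [input_code Sig Q I F \<Delta> \<Delta>2] (output_code Q \<rho> \<nu>))"
proof -
  obtain rM rf rq re where
    mge: "mge_monoid M f e" and
    rM: "computes_on rM UNIV (\<lambda>x. if x \<in> M then 1 else 0)" and
    rf: "computes_on rf (pairs_code M) (\<lambda>x. f (fst (prod_decode x)) (snd (prod_decode x)))" and
    rq: "computes_on rq (pairs_code M)
            (\<lambda>x. if equalizable M f (fst (prod_decode x)) (snd (prod_decode x)) then 1 else 0)" and
    re: "computes_on re (pairs_code M) (\<lambda>x. prod_encode (\<eta> (prod_decode x)))"
    using assms unfolding effective_mge_monoid_def by blast
  have mon: "monoid_on M f e" using mge by (simp add: mge_monoid_def)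
  have eM: "e \<in> M" using mon by (simp add: monoid_on_def)
  define mM where "mM x = (if x \<in> M then 1 else (0::nat))" for x
  have cmM0: "comp1 mM"
    using rM unfolding computes_on_def comp1_def mM_def by blast
  have cmM: "comp1 F \<Longrightarrow> comp1 (\<lambda>x. mM (F x))" for F using c_comp[OF cmM0] .
  define san where "san z = (if mM (p1 z) = 0 \<or> mM (p2 z) = 0 then P e e else z)" for z
  have csan: "comp1 san"
  proof -
    have "comp1 (\<lambda>z. if mM (p1 z) = 0 \<or> mM (p2 z) = 0 then P e e else z)"
      by (intro cbase cmM)
    then show ?thesis unfolding san_def .
  qed
  have sanD: "san z \<in> pairs_code M" for z
  proof (cases "mM (p1 z) = 0 \<or> mM (p2 z) = 0")
    case True then show ?thesis using eM by (simp add: san_def pairs_code_def)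
  next
    case False
    then have "p1 z \<in> M" "p2 z \<in> M" by (auto simp: mM_def split: if_splits)
    then have "prod_decode z \<in> M \<times> M" by (cases "prod_decode z") auto
    then have "prod_encode (prod_decode z) \<in> pairs_code M" unfolding pairs_code_def by (rule imageI)
    then show ?thesis using False by (simp add: san_def)
  qed
  have san_id: "san (P a b) = P a b" if "a \<in> M" "b \<in> M" for a b
    using that by (simp add: san_def mM_def)
  define ft where "ft z = f (p1 (san z)) (p2 (san z))" for z
  define eqz where "eqz z = (if equalizable M f (p1 (san z)) (p2 (san z)) then 1 else (0::nat))" for z
  define et where "et z = prod_encode (\<eta> (prod_decode (san z)))" for z
  have cft: "comp1 ft" unfolding ft_def using c_ext[OF rf csan sanD] by simp
  have ceqz: "comp1 eqz" unfolding eqz_def using c_ext[OF rq csan sanD] by simp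
  have cet: "comp1 et" unfolding et_def using c_ext[OF re csan sanD] by simp
  interpret A: alg_comp ft eqz et e
    by (unfold_locales; fact cft ceqz cet)
  interpret C: alg_corr ft eqz et e M f \<eta>
    by unfold_locales (simp_all add: mon ft_def eqz_def et_def san_id)
  obtain r where r: "\<And>x. eval_recf r [x] (A.main x)" using A.c_main unfolding comp1_def by blast
  show ?thesis
  proof (rule exI[of _ r], intro allI impI)
    fix Sig Q I F \<Delta> \<Delta>2
    assume h: "transducer M Sig Q I F \<Delta> \<and> squared_output_automaton M f e Sig Q I F \<Delta> \<Delta>2"
    obtain \<rho> \<nu> where v: "valuation M f e \<eta> Q I F \<Delta>2 \<rho> \<nu>"
      and o: "A.main (input_code Sig Q I F \<Delta> \<Delta>2) = output_code Q \<rho> \<nu>"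
      using C.main_ok h by blast
    show "\<exists>\<rho> \<nu>. valuation M f e \<eta> Q I F \<Delta>2 \<rho> \<nu>
                  \<and> eval_recf r [input_code Sig Q I F \<Delta> \<Delta>2] (output_code Q \<rho> \<nu>)"
      using v r[of "input_code Sig Q I F \<Delta> \<Delta>2"] o by auto
  qed
qed


end
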